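(* Let $S$ be an integral domain of characteristic zero, and let $R$ be a subring of $S$. Suppose $g,h\in S[x]$ are monic polynomials with zero constant term (i.e. $g,h\in xS[x]$) such that $g(h(x))\in R[x]$. Then all coefficients of $g$ and of $h$ lie in $\mathbb{Q}.R$.
   Context: Here $\mathbb{Q}.R$ denotes the subring of the fraction field of $S$ generated by $\mathbb{Q}$ and $R$, i.e. the set of elements $r/n$ with $r\in R$ and $n$ a positive integer (this makes sense since $S$ has characteristic zero). *)

theory Defs
  imports "HOL-Computational_Algebra.Polynomial" "HOL-Computational_Algebra.Fraction_Field"
begin

definition is_subring :: "'a :: comm_ring_1 set \<Rightarrow> bool" where
  "is_subring R \<longleftrightarrow> 0 \<in> R \<and> 1 \<in> R \<and>
     (\<forall>x\<in>R. \<forall>y\<in>R. x + y \<in> R \<and> x * y \<in> R) \<and> (\<forall>x\<in>R. - x \<in> R)"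

definition QR :: "'a :: idom set \<Rightarrow> 'a fract set" where
  "QR R = {Fract r (of_nat n) | r n. r \<in> R \<and> n > 0}"

end

theory Submission
  imports Defs
begin

lemma pcompose_monom': "pcompose (monom c n) q = smult c (q ^ n)"
  by (induction n) (auto simp: monom_Suc pcompose_pCons monom_0)

lemma coeff_mult_le:
  fixes p q :: "'a::comm_semiring_1 poly"
  assumes "degree p \<le> a" "degree q \<le> b"
  shows "coeff (p * q) (a + b) = coeff p a * coeff q b"
proof (cases "degree p = a \<and> degree q = b")
  case True
  then show ?thesis using coeff_mult_degree_sum[of p q] by simp
next
  case False
  then have "degree p < a \<or> degree q < b" using assms by auto
  moreover have "degree (p * q) \<le> degree p + degree q" by (rule degree_mult_le)
  ultimately have "degree (p * q) < a + b" using assms by linarith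
  then have "coeff (p * q) (a + b) = 0" by (simp add: coeff_eq_0)
  moreover have "coeff p a * coeff q b = 0"
    using \<open>degree p < a \<or> degree q < b\<close> by (auto simp: coeff_eq_0)
  ultimately show ?thesis by simp
qed

lemma coeff_power_le:
  fixes p :: "'a::comm_semiring_1 poly"
  assumes "degree p \<le> a"
  shows "coeff (p ^ k) (k * a) = coeff p a ^ k"
proof (induction k)
  case 0 then show ?case by simp
next
  case (Suc k)
  have d: "degree (p ^ k) \<le> k * a"
    using degree_power_le[of p k] assms
    by (metis dual_order.trans mult.commute mult_le_mono2)
  have "coeff (p ^ Suc k) (Suc k * a) = coeff (p * p ^ k) (a + k * a)" by simp
  also have "\<dots> = coeff p a * coeff (p ^ k) (k * a)"
    by (rule coeff_mult_le[OF assms d])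
  finally show ?case using Suc by simp
qed

context
  fixes B :: "'a :: idom set"
  assumes B0: "0 \<in> B" and B1: "1 \<in> B"
    and Badd: "\<And>x y. x \<in> B \<Longrightarrow> y \<in> B \<Longrightarrow> x + y \<in> B"
    and Bmult: "\<And>x y. x \<in> B \<Longrightarrow> y \<in> B \<Longrightarrow> x * y \<in> B"
    and Bneg: "\<And>x. x \<in> B \<Longrightarrow> - x \<in> B"
    and Bdiv: "\<And>d c. d > 0 \<Longrightarrow> of_nat d * c \<in> B \<Longrightarrow> c \<in> B"
begin

lemma Bpoly_mult: "(\<And>i. coeff p i \<in> B) \<Longrightarrow> (\<And>i. coeff q i \<in> B) \<Longrightarrow> coeff (p * q) i \<in> B"
  by (rule coeff_mult_semiring_closed[of B, OF B0 Badd Bmult])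

lemma Bpoly_power: "(\<And>i. coeff p i \<in> B) \<Longrightarrow> coeff (p ^ n) i \<in> B"
proof (induction n arbitrary: i)
  case 0 then show ?case by (auto simp: coeff_1 B0 B1)
next
  case (Suc n) then show ?case by (auto intro: Bpoly_mult)
qed

lemma G_in:
  assumes Hc: "\<And>i. coeff H i \<in> B" and lH: "lead_coeff H = 1" and dH: "degree H > 0"
  shows "(\<forall>i. coeff (pcompose G H) i \<in> B) \<Longrightarrow> (\<forall>i. coeff G i \<in> B)"
proof (induction "degree G" arbitrary: G rule: less_induct)
  case less
  define n where "n = degree G"
  define c where "c = lead_coeff G"
  have "lead_coeff (pcompose G H) = c"
    using lead_coeff_comp[OF dH, of G] lH c_def by simp
  then have cB: "c \<in> B" using less.prems by metis
  show ?case
  proof (cases "n = 0")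
    case True
    then have "G = [:c:]" using c_def n_def degree_0_id[of G] by simp
    then show ?thesis using cB B0 by (auto simp: coeff_pCons split: nat.splits)
  next
    case False
    define G' where "G' = G - monom c n"
    have "\<forall>i>n - 1. coeff G' i = 0"
      using False by (auto simp: G'_def c_def n_def coeff_monom coeff_eq_0)
    then have "degree G' \<le> n - 1" by (rule degree_le)
    then have lt: "degree G' < degree G" using False n_def by linarith
    have "pcompose G' H = pcompose G H - smult c (H ^ n)"
      by (simp add: G'_def pcompose_diff pcompose_monom')
    have "coeff (pcompose G' H) i \<in> B" for i
    proof -
      have "coeff (pcompose G' H) i = coeff (pcompose G H) i + - (c * coeff (H ^ n) i)"
        using \<open>pcompose G' H = pcompose G H - smult c (H ^ n)\<close> by simp
      also have "\<dots> \<in> B"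
        using less.prems by (intro Badd Bneg Bmult cB Bpoly_power[OF Hc]) auto
      finally show ?thesis .
    qed
    then have "\<forall>i. coeff (pcompose G' H) i \<in> B" by blast
    then have "\<forall>i. coeff G' i \<in> B" using less.hyps[OF lt] by blast
    moreover have "G = G' + monom c n" by (simp add: G'_def)
    ultimately show ?thesis
    proof (intro allI)
      fix i
      assume G'B: "\<forall>i. coeff G' i \<in> B" and GG: "G = G' + monom c n"
      have "coeff G i = coeff G' i + (if n = i then c else 0)"
        by (subst GG) (simp only: coeff_add coeff_monom)
      then show "coeff G i \<in> B" using G'B cB B0 Badd by (cases "n = i") auto
    qed
  qed
qed

lemma H_in:
  assumes lG: "lead_coeff G = 1" and G0: "coeff G 0 = 0"
    and lH: "lead_coeff H = 1" and H0: "coeff H 0 = 0"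
    and F: "\<forall>i. coeff (pcompose G H) i \<in> B"
  shows "\<forall>i. coeff H i \<in> B"
proof -
  define e where "e = degree H"
  define d where "d = degree G"
  have d0: "d > 0"
  proof (rule ccontr)
    assume "\<not> d > 0" then have "d = 0" by simp
    then have "lead_coeff G = coeff G 0" by (simp add: d_def)
    with lG G0 show False by simp
  qed
  define G1 where "G1 = G - monom 1 d"
  have "\<forall>i>d - 1. coeff G1 i = 0"
    using d0 lG by (auto simp: G1_def d_def coeff_monom coeff_eq_0)
  then have dG1: "degree G1 \<le> d - 1" by (rule degree_le)
  have FG: "pcompose G H = pcompose G1 H + H ^ d"
    by (simp add: G1_def pcompose_diff pcompose_monom')
  have dG1H: "degree (pcompose G1 H) \<le> (d - 1) * e"
    using dG1 by (simp add: degree_pcompose e_def)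
  have main: "\<forall>i \<ge> e - k. coeff H i \<in> B" if "k \<le> e" for k
    using that
  proof (induction k)
    case 0
    show ?case
    proof (intro allI impI)
      fix i assume "e - 0 \<le> i"
      then show "coeff H i \<in> B"
        using lH B1 B0 e_def by (cases "i = e") (auto simp: coeff_eq_0)
    qed
  next
    case (Suc k)
    define m where "m = e - Suc k"
    have "Suc m = e - k" using Suc.prems m_def by linarith
    then have IH: "\<forall>i \<ge> Suc m. coeff H i \<in> B" using Suc by simp
    have me: "Suc m \<le> e" using Suc m_def by linarith
    have "coeff H m \<in> B"
    proof (cases "m = 0")
      case True then show ?thesis using H0 B0 by simp
    next
      case False
      define Q where "Q = poly_cutoff (Suc m) H"
      define P where "P = H - Q"
      have cP: "coeff P i = (if i < Suc m then 0 else coeff H i)" for i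
        by (simp add: P_def Q_def coeff_poly_cutoff)
      have PB: "\<And>i. coeff P i \<in> B" using cP IH B0 by auto
      have "\<forall>i>e. coeff P i = 0" using cP e_def by (simp add: coeff_eq_0)
      then have dP: "degree P \<le> e" by (rule degree_le)
      have cPe: "coeff P e = 1" using cP me lH e_def by simp
      have "\<forall>i>m. coeff Q i = 0" by (simp add: Q_def coeff_poly_cutoff)
      then have dQ: "degree Q \<le> m" by (rule degree_le)
      have cQm: "coeff Q m = coeff H m" by (simp add: Q_def coeff_poly_cutoff)
      define S where "S = (\<Sum>i<d. P ^ (d - Suc i) * H ^ i)"
      have diff: "H ^ d - P ^ d = Q * S"
        unfolding S_def using power_diff_sumr2[of H d P] by (simp add: P_def)
      have term_deg: "degree (P ^ (d - Suc i) * H ^ i) \<le> (d - Suc i) * e + i * e" for i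
      proof -
        have "degree (P ^ (d - Suc i)) \<le> (d - Suc i) * e"
          using degree_power_le[of P "d - Suc i"] dP
          by (metis dual_order.trans mult.commute mult_le_mono2)
        moreover have "degree (H ^ i) \<le> i * e"
          using degree_power_le[of H i] e_def by (simp add: mult.commute)
        ultimately show ?thesis using degree_mult_le[of "P ^ (d - Suc i)" "H ^ i"] by linarith
      qed
      have ar: "(d - Suc i) * e + i * e = (d - 1) * e" if "i < d" for i
      proof -
        have "d - Suc i + i = d - 1" using that by linarith
        then show ?thesis by (metis add_mult_distrib)
      qed
      have dS: "degree S \<le> (d - 1) * e"
        unfolding S_def
        apply (rule degree_sum_le)
         apply simp
        subgoal for i using term_deg[of i] ar[of i] by simp
        done
      have "coeff S ((d - 1) * e) = (\<Sum>i<d. coeff (P ^ (d - Suc i) * H ^ i) ((d - 1) * e))"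
        by (simp add: S_def coeff_sum)
      also have "\<dots> = (\<Sum>i<d. 1)"
      proof (rule sum.cong[OF refl])
        fix i assume "i \<in> {..<d}"
        then have "coeff (P ^ (d - Suc i) * H ^ i) ((d - 1) * e)
            = coeff (P ^ (d - Suc i) * H ^ i) ((d - Suc i) * e + i * e)" using ar by simp
        also have "\<dots> = coeff (P ^ (d - Suc i)) ((d - Suc i) * e) * coeff (H ^ i) (i * e)"
        proof (rule coeff_mult_le)
          show "degree (P ^ (d - Suc i)) \<le> (d - Suc i) * e"
            using degree_power_le[of P "d - Suc i"] dP
            by (metis dual_order.trans mult.commute mult_le_mono2)
          show "degree (H ^ i) \<le> i * e"
            using degree_power_le[of H i] e_def by (simp add: mult.commute)
        qed
        also have "\<dots> = 1"
          using coeff_power_le[OF dP, of "d - Suc i"] coeff_power_le[of H e i] cPe lH e_def by simp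
        finally show "coeff (P ^ (d - Suc i) * H ^ i) ((d - 1) * e) = 1" .
      qed
      finally have cS: "coeff S ((d - 1) * e) = of_nat d" by simp
      define N where "N = m + (d - 1) * e"
      have cQS: "coeff (Q * S) N = coeff H m * of_nat d"
        unfolding N_def using coeff_mult_le[OF dQ dS] cQm cS by simp
      have "coeff (pcompose G1 H) N = 0"
        using dG1H False N_def by (intro coeff_eq_0) linarith
      then have "coeff (pcompose G H) N = coeff (H ^ d) N" using FG by simp
      also have "H ^ d = P ^ d + Q * S" using diff by (simp add: algebra_simps)
      finally have "of_nat d * coeff H m = coeff (pcompose G H) N + - coeff (P ^ d) N"
        using cQS by (simp add: algebra_simps)
      moreover have "coeff (P ^ d) N \<in> B" using Bpoly_power[OF PB] .
      moreover have "coeff (pcompose G H) N + - coeff (P ^ d) N \<in> B"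
        using F \<open>coeff (P ^ d) N \<in> B\<close> by (intro Badd Bneg) auto
      ultimately have "of_nat d * coeff H m \<in> B" by simp
      then show ?thesis using Bdiv d0 by blast
    qed
    show ?case
    proof (intro allI impI)
      fix i assume "e - Suc k \<le> i"
      then have "i = m \<or> Suc m \<le> i" using m_def by linarith
      then show "coeff H i \<in> B" using IH \<open>coeff H m \<in> B\<close> by auto
    qed
  qed
  show ?thesis
  proof
    fix i
    show "coeff H i \<in> B" using main[of e] by simp
  qed
qed

end

theorem proposition2p1:
  fixes R :: "'a :: {idom, ring_char_0} set"
    and g h :: "'a poly"
  assumes "is_subring R"
    and "lead_coeff g = 1" and "coeff g 0 = 0"
    and "lead_coeff h = 1" and "coeff h 0 = 0"
    and "\<forall>i. coeff (pcompose g h) i \<in> R"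
  shows "(\<forall>i. Fract (coeff g i) 1 \<in> QR R) \<and> (\<forall>i. Fract (coeff h i) 1 \<in> QR R)"
proof -
  have sr: "0 \<in> R" "1 \<in> R" "\<And>x y. x \<in> R \<Longrightarrow> y \<in> R \<Longrightarrow> x + y \<in> R"
    "\<And>x y. x \<in> R \<Longrightarrow> y \<in> R \<Longrightarrow> x * y \<in> R" "\<And>x. x \<in> R \<Longrightarrow> - x \<in> R"
    using assms(1) unfolding is_subring_def by auto
  have natR: "of_nat n \<in> R" for n
    by (induction n) (auto intro: sr)
  define B where "B = {x. \<exists>n>0. of_nat n * x \<in> R}"
  have RB: "x \<in> B" if "x \<in> R" for x
    unfolding B_def using that by (intro CollectI exI[of _ "1::nat"]) simp
  have B0: "0 \<in> B" by (rule RB[OF sr(1)])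
  have B1: "1 \<in> B" by (rule RB[OF sr(2)])
  have Badd: "x + y \<in> B" if "x \<in> B" "y \<in> B" for x y
  proof -
    from that(1) obtain n :: nat where n: "n > 0" "of_nat n * x \<in> R"
      unfolding B_def by auto
    from that(2) obtain m :: nat where m: "m > 0" "of_nat m * y \<in> R"
      unfolding B_def by auto
    have a: "of_nat m * (of_nat n * x) \<in> R" by (rule sr(4)[OF natR n(2)])
    have b: "of_nat n * (of_nat m * y) \<in> R" by (rule sr(4)[OF natR m(2)])
    have "of_nat (n * m) * (x + y) = of_nat m * (of_nat n * x) + of_nat n * (of_nat m * y)"
      by (simp add: algebra_simps)
    also have "\<dots> \<in> R" by (rule sr(3)[OF a b])
    finally have c: "of_nat (n * m) * (x + y) \<in> R" .
    have "n * m > 0" using n(1) m(1) by simp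
    then have "\<exists>k>0. of_nat k * (x + y) \<in> R" using c by blast
    then show ?thesis unfolding B_def by simp
  qed
  have Bmult: "x * y \<in> B" if "x \<in> B" "y \<in> B" for x y
  proof -
    from that(1) obtain n :: nat where n: "n > 0" "of_nat n * x \<in> R"
      unfolding B_def by auto
    from that(2) obtain m :: nat where m: "m > 0" "of_nat m * y \<in> R"
      unfolding B_def by auto
    have "of_nat (n * m) * (x * y) = (of_nat n * x) * (of_nat m * y)"
      by (simp add: algebra_simps)
    also have "\<dots> \<in> R" by (rule sr(4)[OF n(2) m(2)])
    finally have c: "of_nat (n * m) * (x * y) \<in> R" .
    have "n * m > 0" using n(1) m(1) by simp
    then have "\<exists>k>0. of_nat k * (x * y) \<in> R" using c by blast
    then show ?thesis unfolding B_def by simp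
  qed
  have Bneg: "- x \<in> B" if "x \<in> B" for x
  proof -
    from that obtain n :: nat where n: "n > 0" "of_nat n * x \<in> R" unfolding B_def by auto
    have "of_nat n * (- x) = - (of_nat n * x)" by simp
    also have "\<dots> \<in> R" by (rule sr(5)[OF n(2)])
    finally have c: "of_nat n * (- x) \<in> R" .
    then have "\<exists>k>0. of_nat k * (- x) \<in> R" using n(1) by blast
    then show ?thesis unfolding B_def by simp
  qed
  have Bdiv: "c \<in> B" if "d > 0" "of_nat d * c \<in> B" for d c
  proof -
    from that(2) obtain n :: nat where n: "n > 0" "of_nat n * (of_nat d * c) \<in> R" unfolding B_def by auto
    have eq: "of_nat (n * d) * c = of_nat n * (of_nat d * c)" by (simp add: algebra_simps)
    have c: "of_nat (n * d) * c \<in> R" unfolding eq by (rule n(2))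
    have "n * d > 0" using n(1) that(1) by simp
    then have "\<exists>k>0. of_nat k * c \<in> R" using c by blast
    then show ?thesis unfolding B_def by simp
  qed
  have BQ: "Fract x 1 \<in> QR R" if "x \<in> B" for x
  proof -
    from that obtain n :: nat where n: "n > 0" "of_nat n * x \<in> R" unfolding B_def by auto
    have "Fract x 1 = Fract (of_nat n * x) (of_nat n)"
      using n by (subst eq_fract) (auto simp: algebra_simps)
    then show ?thesis unfolding QR_def using n by blast
  qed
  have FB: "\<forall>i. coeff (pcompose g h) i \<in> B"
  proof
    fix i show "coeff (pcompose g h) i \<in> B" using assms(6) by (intro RB) simp
  qed
  have hB: "\<forall>i. coeff h i \<in> B"
    by (rule H_in[of B, OF B0 B1 Badd Bmult Bneg Bdiv assms(2) assms(3) assms(4) assms(5) FB])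
  have dh: "degree h > 0"
  proof (rule ccontr)
    assume "\<not> degree h > 0"
    then have "lead_coeff h = coeff h 0" by simp
    with assms(4,5) show False by simp
  qed
  have hB': "\<And>i. coeff h i \<in> B" using hB by simp
  have gB: "\<forall>i. coeff g i \<in> B"
    by (rule G_in[of B, OF B0 B1 Badd Bmult Bneg Bdiv hB' assms(4) dh FB])
  show ?thesis
  proof (intro conjI allI)
    fix i
    show "Fract (coeff g i) 1 \<in> QR R" by (rule BQ) (use gB in simp)
    show "Fract (coeff h i) 1 \<in> QR R" by (rule BQ) (use hB in simp)
  qed
qed

end
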